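(* Let $K$ be a compact Lie group with complexification $G=K_\mathbb{C}$, and let $Q$ be a quiver with a finite set of relations $R$. If $f_1,f_2\in\mathcal{F}_K(Q,R)$ lie in the same $\mathcal{G}_G(Q)$-orbit, then they lie in the same $\mathcal{G}_K(Q)$-orbit.
   Context: A quiver $Q=(Q_V,Q_A)$ is a finite directed graph; each arrow $a$ has head $h_a$ and tail $t_a$; relations are cycles $a_k\cdots a_1$ (paths with $h_{a_j}=t_{a_{j+1}}$ and $h_{a_k}=t_{a_1}$). For a group $H$, $\mathcal{F}_H(Q,R)$ is the set of maps $f:Q_A\to H$ with $f(a_k)\cdots f(a_1)=I$ for each cycle in $R$, and the gauge group $\mathcal{G}_H(Q)$ of maps $Q_V\to H$ acts by $(g\cdot f)(a)=g(h_a)f(a)g(t_a)^{-1}$. $K\subset G$ naturally, so $\mathcal{F}_K(Q,R)\subset\mathcal{F}_G(Q,R)$. *)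

theory Defs
  imports "HOL-Analysis.Analysis"
begin

primrec matpow :: "complex^'n^'n \<Rightarrow> nat \<Rightarrow> complex^'n^'n" where
  "matpow X 0 = mat 1"
| "matpow X (Suc k) = X ** matpow X k"

definition mexp :: "complex^'n^'n \<Rightarrow> complex^'n^'n" where
  "mexp X = (\<Sum>k. (1 / (fact k :: real)) *\<^sub>R matpow X k)"

definition cscale :: "complex \<Rightarrow> complex^'n^'n \<Rightarrow> complex^'n^'n" where
  "cscale c X = (\<chi> i j. c * X $ i $ j)"

text \<open>A compact (closed) subgroup of GL_n(C); by Cartan's closed subgroup theorem
  this is a compact Lie group, and every compact Lie group arises this way.\<close>
definition compact_matrix_group :: "(complex^'n^'n) set \<Rightarrow> bool" where
  "compact_matrix_group K \<longleftrightarrow> compact K \<and> mat 1 \<in> K \<and>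
     (\<forall>x\<in>K. invertible x \<and> matrix_inv x \<in> K) \<and>
     (\<forall>x\<in>K. \<forall>y\<in>K. x ** y \<in> K)"

definition lie_alg :: "(complex^'n^'n) set \<Rightarrow> (complex^'n^'n) set" where
  "lie_alg K = {X. \<forall>t::real. mexp (t *\<^sub>R X) \<in> K}"

text \<open>Complexification K_C = K exp(i k) (polar decomposition), realised inside GL_n(C).\<close>
definition complexification :: "(complex^'n^'n) set \<Rightarrow> (complex^'n^'n) set" where
  "complexification K = {k ** mexp (cscale \<i> X) | k X. k \<in> K \<and> X \<in> lie_alg K}"

definition quiver :: "'v set \<Rightarrow> 'e set \<Rightarrow> ('e \<Rightarrow> 'v) \<Rightarrow> ('e \<Rightarrow> 'v) \<Rightarrow> bool" where
  "quiver QV QA hh tt \<longleftrightarrow> finite QV \<and> finite QA \<and> (\<forall>a\<in>QA. hh a \<in> QV \<and> tt a \<in> QV)"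

text \<open>A cycle a_k ... a_1 is represented by the list [a_1, ..., a_k].\<close>
definition is_cycle :: "'e set \<Rightarrow> ('e \<Rightarrow> 'v) \<Rightarrow> ('e \<Rightarrow> 'v) \<Rightarrow> 'e list \<Rightarrow> bool" where
  "is_cycle QA hh tt as \<longleftrightarrow> as \<noteq> [] \<and> set as \<subseteq> QA \<and>
     (\<forall>j. Suc j < length as \<longrightarrow> hh (as ! j) = tt (as ! Suc j)) \<and>
     hh (last as) = tt (as ! 0)"

text \<open>f(a_k) ... f(a_1) for the list [a_1,...,a_k].\<close>
definition path_prod :: "('e \<Rightarrow> complex^'n^'n) \<Rightarrow> 'e list \<Rightarrow> complex^'n^'n" where
  "path_prod f as = foldl (\<lambda>acc a. f a ** acc) (mat 1) as"

definition reps :: "(complex^'n^'n) set \<Rightarrow> 'e set \<Rightarrow> 'e list set \<Rightarrow> ('e \<Rightarrow> complex^'n^'n) set"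
  where "reps H QA R = {f. f \<in> QA \<rightarrow>\<^sub>E H \<and> (\<forall>r\<in>R. path_prod f r = mat 1)}"

definition gauge :: "(complex^'n^'n) set \<Rightarrow> 'v set \<Rightarrow> ('v \<Rightarrow> complex^'n^'n) set" where
  "gauge H QV = QV \<rightarrow>\<^sub>E H"

definition gauge_act :: "'e set \<Rightarrow> ('e \<Rightarrow> 'v) \<Rightarrow> ('e \<Rightarrow> 'v) \<Rightarrow> ('v \<Rightarrow> complex^'n^'n)
    \<Rightarrow> ('e \<Rightarrow> complex^'n^'n) \<Rightarrow> ('e \<Rightarrow> complex^'n^'n)" where
  "gauge_act QA hh tt g f = (\<lambda>a\<in>QA. g (hh a) ** f a ** matrix_inv (g (tt a)))"

end

theory Submission
  imports Defs
begin


typedef ('n::finite) cm = "UNIV :: (complex^'n^'n) set" morphisms Rep_cm Abs_cm by auto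

setup_lifting type_definition_cm

definition rowsum :: "complex^'n^'n \<Rightarrow> 'n::finite \<Rightarrow> real" where
  "rowsum A i = (\<Sum>j\<in>UNIV. cmod (A$i$j))"

definition mnorm :: "complex^'n^'n \<Rightarrow> real" where
  "mnorm A = Max (range (rowsum A))"

lemma rowsum_le_mnorm: "rowsum A i \<le> mnorm A"
  unfolding mnorm_def by (rule Max_ge) auto

lemma mnorm_le: "(\<And>i. rowsum A i \<le> c) \<Longrightarrow> mnorm A \<le> c"
  unfolding mnorm_def by (subst Max_le_iff) auto

lemma mnorm_attained: "\<exists>i. mnorm A = rowsum A i"
proof -
  have "mnorm A \<in> range (rowsum A)" unfolding mnorm_def by (rule Max_in) auto
  then show ?thesis by auto
qed

lemma entry_le_mnorm: "cmod (A$i$j) \<le> mnorm (A::complex^'n^'n::finite)"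
proof -
  have "cmod (A$i$j) \<le> rowsum A i" unfolding rowsum_def
    by (intro member_le_sum) auto
  then show ?thesis using rowsum_le_mnorm order_trans by blast
qed

lemma mnorm_nonneg: "0 \<le> mnorm A"
  using entry_le_mnorm[of A] norm_ge_zero order_trans by blast

lemma mnorm_eq_0: "mnorm A = 0 \<longleftrightarrow> A = 0"
proof
  assume "mnorm A = 0"
  then show "A = 0" using entry_le_mnorm[of A]
    by (simp add: vec_eq_iff)
next
  assume "A = 0" then show "mnorm A = 0"
    by (intro antisym mnorm_le mnorm_nonneg) (simp add: rowsum_def)
qed

lemma mnorm_triangle: "mnorm (A + B) \<le> mnorm A + mnorm B"
proof (rule mnorm_le)
  fix i
  have "rowsum (A+B) i \<le> rowsum A i + rowsum B i"
    unfolding rowsum_def sum.distrib[symmetric] by (intro sum_mono) (simp add: norm_triangle_ineq)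
  then show "rowsum (A+B) i \<le> mnorm A + mnorm B"
    using rowsum_le_mnorm[of A i] rowsum_le_mnorm[of B i] by linarith
qed

lemma mnorm_scaleR: "mnorm (a *\<^sub>R A) = \<bar>a\<bar> * mnorm A"
proof -
  have r: "rowsum (a *\<^sub>R A) i = \<bar>a\<bar> * rowsum A i" for i
    by (simp add: rowsum_def sum_distrib_left)
  show ?thesis
  proof (rule antisym)
    show "mnorm (a *\<^sub>R A) \<le> \<bar>a\<bar> * mnorm A"
      by (rule mnorm_le) (simp add: r mult_left_mono rowsum_le_mnorm)
    obtain i where "mnorm A = rowsum A i" using mnorm_attained by blast
    then show "\<bar>a\<bar> * mnorm A \<le> mnorm (a *\<^sub>R A)"
      using rowsum_le_mnorm[of "a *\<^sub>R A" i] r by simp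
  qed
qed

lemma mnorm_mult: "mnorm (A ** B) \<le> mnorm A * mnorm B"
proof (rule mnorm_le)
  fix i
  have "rowsum (A ** B) i = (\<Sum>j\<in>UNIV. cmod (\<Sum>k\<in>UNIV. A$i$k * B$k$j))"
    by (simp add: rowsum_def matrix_matrix_mult_def)
  also have "\<dots> \<le> (\<Sum>j\<in>UNIV. \<Sum>k\<in>UNIV. cmod (A$i$k) * cmod (B$k$j))"
    by (intro sum_mono) (metis (no_types, lifting) norm_mult norm_sum sum.cong)
  also have "\<dots> = (\<Sum>k\<in>UNIV. cmod (A$i$k) * rowsum B k)"
    by (subst sum.swap) (simp add: rowsum_def sum_distrib_left)
  also have "\<dots> \<le> (\<Sum>k\<in>UNIV. cmod (A$i$k) * mnorm B)"
    by (intro sum_mono mult_left_mono rowsum_le_mnorm) auto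
  also have "\<dots> = rowsum A i * mnorm B"
    by (simp add: rowsum_def sum_distrib_right)
  also have "\<dots> \<le> mnorm A * mnorm B"
    by (intro mult_right_mono rowsum_le_mnorm mnorm_nonneg)
  finally show "rowsum (A ** B) i \<le> mnorm A * mnorm B" .
qed

lemma mnorm_one: "mnorm (mat 1 :: complex^'n^'n::finite) = 1"
proof -
  have "rowsum (mat 1 :: complex^'n^'n) i = 1" for i
  proof -
    have "rowsum (mat 1 :: complex^'n^'n) i = (\<Sum>j\<in>UNIV. if j = i then 1 else 0)"
      unfolding rowsum_def by (intro sum.cong) (auto simp: mat_def)
    then show ?thesis by simp
  qed
  then show ?thesis unfolding mnorm_def by simp
qed

instantiation cm :: (finite) real_normed_algebra_1
begin

lift_definition zero_cm :: "'a cm" is 0 .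
lift_definition one_cm :: "'a cm" is "mat 1" .
lift_definition plus_cm :: "'a cm \<Rightarrow> 'a cm \<Rightarrow> 'a cm" is "(+)" .
lift_definition minus_cm :: "'a cm \<Rightarrow> 'a cm \<Rightarrow> 'a cm" is "(-)" .
lift_definition uminus_cm :: "'a cm \<Rightarrow> 'a cm" is "uminus" .
lift_definition times_cm :: "'a cm \<Rightarrow> 'a cm \<Rightarrow> 'a cm" is "(**)" .
lift_definition scaleR_cm :: "real \<Rightarrow> 'a cm \<Rightarrow> 'a cm" is "scaleR" .
lift_definition norm_cm :: "'a cm \<Rightarrow> real" is mnorm .

definition dist_cm :: "'a cm \<Rightarrow> 'a cm \<Rightarrow> real" where "dist_cm a b = norm (a - b)"
definition sgn_cm :: "'a cm \<Rightarrow> 'a cm" where "sgn_cm x = scaleR (inverse (norm x)) x"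
definition uniformity_cm :: "('a cm \<times> 'a cm) filter" where
  "uniformity_cm = (INF e\<in>{0 <..}. principal {(x, y). dist x y < e})"
definition open_cm :: "'a cm set \<Rightarrow> bool" where
  "open_cm S = (\<forall>x\<in>S. \<forall>\<^sub>F (x', y) in uniformity. x' = x \<longrightarrow> y \<in> S)"

lemma scaleR_mmult_left: "(a *\<^sub>R A) ** (B::complex^'n^'n) = a *\<^sub>R (A ** B)"
  by (simp add: vec_eq_iff matrix_matrix_mult_def scaleR_sum_right)
lemma scaleR_mmult_right: "A ** (a *\<^sub>R B) = a *\<^sub>R (A ** (B::complex^'n^'n))"
  by (simp add: vec_eq_iff matrix_matrix_mult_def scaleR_sum_right)
lemma matrix_add_rdistrib: "((B + C) ** A) = (B ** A) + (C ** (A::'b::semiring_1^'n^'n))"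
  by (vector matrix_matrix_mult_def sum.distrib[symmetric] field_simps)

instance
proof
  show "dist x y = norm (x - y)" for x y :: "'a cm" by (simp add: dist_cm_def)
  show "sgn x = inverse (norm x) *\<^sub>R x" for x :: "'a cm" by (simp add: sgn_cm_def)
  show "uniformity = (INF e\<in>{0<..}. principal {(x, y::'a cm). dist x y < e})" by (simp add: uniformity_cm_def)
  show "open U = (\<forall>x\<in>U. \<forall>\<^sub>F (x', y) in uniformity. x' = x \<longrightarrow> y \<in> U)" for U :: "'a cm set"
    by (simp add: open_cm_def)
  show "a + b + c = a + (b + c)" for a b c :: "'a cm" by transfer (simp add: add.assoc)
  show "a + b = b + a" for a b :: "'a cm" by transfer (simp add: add.commute)
  show "0 + a = a" for a :: "'a cm" by transfer simp
  show "- a + a = 0" for a :: "'a cm" by transfer simp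
  show "a - b = a + - b" for a b :: "'a cm" by transfer simp
  show "r *\<^sub>R (a + b) = r *\<^sub>R a + r *\<^sub>R b" for r and a b :: "'a cm" by transfer (simp add: scaleR_right_distrib)
  show "(r + q) *\<^sub>R a = r *\<^sub>R a + q *\<^sub>R a" for r q and a :: "'a cm" by transfer (simp add: scaleR_left_distrib)
  show "r *\<^sub>R q *\<^sub>R a = (r * q) *\<^sub>R a" for r q and a :: "'a cm" by transfer simp
  show "1 *\<^sub>R a = a" for a :: "'a cm" by transfer simp
  show "a * b * c = a * (b * c)" for a b c :: "'a cm" by transfer (simp add: matrix_mul_assoc)
  show "(a + b) * c = a * c + b * c" for a b c :: "'a cm" by transfer (simp add: matrix_add_rdistrib)
  show "a * (b + c) = a * b + a * c" for a b c :: "'a cm" by transfer (simp add: matrix_add_ldistrib)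
  show "1 * a = a" for a :: "'a cm" by transfer simp
  show "a * 1 = a" for a :: "'a cm" by transfer simp
  show "(0::'a cm) \<noteq> 1" by transfer (simp add: vec_eq_iff mat_def)
  show "r *\<^sub>R a * b = r *\<^sub>R (a * b)" for r and a b :: "'a cm" by transfer (simp add: scaleR_mmult_left)
  show "a * r *\<^sub>R b = r *\<^sub>R (a * b)" for r and a b :: "'a cm" by transfer (simp add: scaleR_mmult_right)
  show "(norm a = 0) = (a = 0)" for a :: "'a cm" by transfer (simp add: mnorm_eq_0)
  show "norm (a + b) \<le> norm a + norm b" for a b :: "'a cm" by transfer (simp add: mnorm_triangle)
  show "norm (r *\<^sub>R a) = \<bar>r\<bar> * norm a" for r and a :: "'a cm" by transfer (simp add: mnorm_scaleR)
  show "norm (a * b) \<le> norm a * norm b" for a b :: "'a cm" by transfer (simp add: mnorm_mult)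
  show "norm (1::'a cm) = 1" by transfer (simp add: mnorm_one)
qed

end


lemma norm_cm_Rep: "norm (A::'n::finite cm) = mnorm (Rep_cm A)"
  by transfer simp

lemma entry_le_norm_cm: "cmod (Rep_cm A $ i $ j) \<le> norm A"
  by (simp add: norm_cm_Rep entry_le_mnorm)

lemma mnorm_le_sum: "mnorm (A::complex^'n^'n::finite) \<le> (\<Sum>i\<in>UNIV. \<Sum>j\<in>UNIV. cmod (A$i$j))"
proof (rule mnorm_le)
  fix i show "rowsum A i \<le> (\<Sum>i\<in>UNIV. \<Sum>j\<in>UNIV. cmod (A$i$j))"
    unfolding rowsum_def by (intro member_le_sum) (auto intro: sum_nonneg)
qed

lemma Rep_cm_diff: "Rep_cm (A - B) = Rep_cm A - Rep_cm B" by transfer simp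
lemma Rep_cm_add: "Rep_cm (A + B) = Rep_cm A + Rep_cm B" by transfer simp
lemma Rep_cm_mult: "Rep_cm (A * B) = Rep_cm A ** Rep_cm B" by transfer simp
lemma Rep_cm_one: "Rep_cm 1 = mat 1" by transfer simp
lemma Rep_cm_zero: "Rep_cm 0 = 0" by transfer simp
lemma Rep_cm_scaleR: "Rep_cm (r *\<^sub>R A) = r *\<^sub>R Rep_cm A" by transfer simp
lemma Rep_cm_uminus: "Rep_cm (- A) = - Rep_cm A" by transfer simp

instance cm :: (finite) banach
proof
  fix X :: "nat \<Rightarrow> 'a cm"
  assume C: "Cauchy X"
  have "Cauchy (\<lambda>n. Rep_cm (X n) $ i $ j)" for i j
  proof (rule CauchyI)
    fix e :: real assume "0 < e"
    from CauchyD[OF C this] obtain M where M: "\<And>m n. m \<ge> M \<Longrightarrow> n \<ge> M \<Longrightarrow> norm (X m - X n) < e"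
      by auto
    show "\<exists>M. \<forall>m\<ge>M. \<forall>n\<ge>M. norm (Rep_cm (X m) $ i $ j - Rep_cm (X n) $ i $ j) < e"
      using M entry_le_norm_cm[of "X _ - X _" i j] by (metis Rep_cm_diff order_le_less_trans vector_minus_component)
  qed
  then have "\<exists>l. (\<lambda>n. Rep_cm (X n) $ i $ j) \<longlonglongrightarrow> l" for i j
    using Cauchy_convergent_iff convergent_def by blast
  then obtain l where l: "\<And>i j. (\<lambda>n. Rep_cm (X n) $ i $ j) \<longlonglongrightarrow> l i j" by metis
  define L where "L = Abs_cm (\<chi> i j. l i j)"
  have "(\<lambda>n. X n - L) \<longlonglongrightarrow> 0"
  proof (rule Lim_null_comparison)
    show "\<forall>\<^sub>F n in sequentially. norm (X n - L) \<le> (\<Sum>i\<in>UNIV. \<Sum>j\<in>UNIV. cmod (Rep_cm (X n) $ i $ j - l i j))"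
    proof (intro always_eventually allI)
      fix n
      show "norm (X n - L) \<le> (\<Sum>i\<in>UNIV. \<Sum>j\<in>UNIV. cmod (Rep_cm (X n) $ i $ j - l i j))"
        using mnorm_le_sum[of "Rep_cm (X n) - (\<chi> i j. l i j)"]
        by (simp add: norm_cm_Rep Rep_cm_diff L_def Abs_cm_inverse)
    qed
    show "(\<lambda>n. \<Sum>i\<in>UNIV. \<Sum>j\<in>UNIV. cmod (Rep_cm (X n) $ i $ j - l i j)) \<longlonglongrightarrow> 0"
    proof -
      have "(\<lambda>n. \<Sum>i\<in>UNIV. \<Sum>j\<in>UNIV. cmod (Rep_cm (X n) $ i $ j - l i j)) \<longlonglongrightarrow> (\<Sum>i\<in>(UNIV::'a set). \<Sum>j\<in>(UNIV::'a set). 0)"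
        by (intro tendsto_sum tendsto_norm_zero) (use l LIM_zero in blast)
      then show ?thesis by simp
    qed
  qed
  then have "X \<longlonglongrightarrow> L" by (simp add: LIM_zero_iff)
  then show "convergent X" by (auto simp: convergent_def)
qed


lemma Abs_cm_inv [simp]: "Rep_cm (Abs_cm x) = x" by (simp add: Abs_cm_inverse)

lemma norm_vec_le_sum: "norm (x::'b::real_normed_vector^'m::finite) \<le> (\<Sum>i\<in>UNIV. norm (x$i))"
  unfolding norm_vec_def by (rule L2_set_le_sum) simp

lemma sum_entries_le: "(\<Sum>i\<in>UNIV. \<Sum>j\<in>UNIV. cmod (A$i$j)) \<le> real CARD('n) * mnorm (A::complex^'n^'n::finite)"
proof -
  have "(\<Sum>i\<in>UNIV. \<Sum>j\<in>UNIV. cmod (A$i$j)) = (\<Sum>i\<in>UNIV. rowsum A i)" by (simp add: rowsum_def)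
  also have "\<dots> \<le> (\<Sum>i\<in>(UNIV::'n set). mnorm A)" by (intro sum_mono rowsum_le_mnorm)
  finally show ?thesis by simp
qed

lemma bounded_linear_Rep_cm: "bounded_linear (Rep_cm :: 'n::finite cm \<Rightarrow> _)"
proof (rule bounded_linear_intro[where K="real CARD('n)"])
  show "Rep_cm (x + y) = Rep_cm x + Rep_cm y" for x y :: "'n cm" by (rule Rep_cm_add)
  show "Rep_cm (r *\<^sub>R x) = r *\<^sub>R Rep_cm x" for r and x :: "'n cm" by (rule Rep_cm_scaleR)
  fix x :: "'n cm"
  have "norm (Rep_cm x) \<le> (\<Sum>i\<in>UNIV. norm (Rep_cm x $ i))" by (rule norm_vec_le_sum)
  also have "\<dots> \<le> (\<Sum>i\<in>UNIV. \<Sum>j\<in>UNIV. cmod (Rep_cm x $ i $ j))"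
    by (intro sum_mono norm_vec_le_sum)
  also have "\<dots> \<le> real CARD('n) * mnorm (Rep_cm x)" by (rule sum_entries_le)
  finally show "norm (Rep_cm x) \<le> norm x * real CARD('n)" by (simp add: norm_cm_Rep mult.commute)
qed

lemma matpow_Rep: "matpow (Rep_cm A) k = Rep_cm (A ^ k)"
  by (induction k) (simp_all add: Rep_cm_one Rep_cm_mult)

lemma mexp_Rep: "mexp (Rep_cm A) = Rep_cm (exp A)"
proof -
  have "Rep_cm (exp A) = (\<Sum>n. Rep_cm (A^n /\<^sub>R fact n))"
    unfolding exp_def by (rule bounded_linear.suminf[OF bounded_linear_Rep_cm summable_exp_generic])
  also have "\<dots> = mexp (Rep_cm A)"
    unfolding mexp_def by (simp add: Rep_cm_scaleR matpow_Rep divide_inverse_commute)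
  finally show ?thesis by simp
qed

lemma mexp_cm: "mexp X = Rep_cm (exp (Abs_cm X))"
  using mexp_Rep[of "Abs_cm X"] by simp

section \<open>Conjugate transpose and trace\<close>

lift_definition ct :: "'n::finite cm \<Rightarrow> 'n cm" is "\<lambda>A. \<chi> i j. cnj (A$j$i)" .
lift_definition tr :: "'n::finite cm \<Rightarrow> complex" is "\<lambda>A. \<Sum>i\<in>UNIV. A$i$i" .

lemma ct_mult: "ct (a * b) = ct b * ct a"
  by transfer (simp add: vec_eq_iff matrix_matrix_mult_def mult.commute)
lemma ct_ct [simp]: "ct (ct a) = a" by transfer (simp add: vec_eq_iff)
lemma ct_one [simp]: "ct 1 = 1" by transfer (simp add: vec_eq_iff mat_def)
lemma ct_add: "ct (a + b) = ct a + ct b" by transfer (simp add: vec_eq_iff)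
lemma ct_diff: "ct (a - b) = ct a - ct b" by transfer (simp add: vec_eq_iff)
lemma ct_uminus: "ct (- a) = - ct a" by transfer (simp add: vec_eq_iff)
lemma ct_scaleR: "ct (r *\<^sub>R a) = r *\<^sub>R ct a" by transfer (simp add: vec_eq_iff)
lemma ct_zero [simp]: "ct 0 = 0" by transfer (simp add: vec_eq_iff)

lemma tr_add: "tr (a + b) = tr a + tr b" by transfer (simp add: sum.distrib)
lemma tr_diff: "tr (a - b) = tr a - tr b" by transfer (simp add: sum_subtractf)
lemma tr_uminus: "tr (- a) = - tr a" by transfer (simp add: sum_negf)
lemma tr_comm: "tr (a * b) = tr (b * a)"
  by transfer (simp add: matrix_matrix_mult_def, subst sum.swap, simp add: mult.commute)
lemma tr_ct: "tr (ct a) = cnj (tr a)" by transfer simp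

lemma bounded_linear_ct: "bounded_linear (ct :: 'n::finite cm \<Rightarrow> _)"
proof (rule bounded_linear_intro[where K="real CARD('n)"])
  show "ct (x + y) = ct x + ct y" for x y :: "'n cm" by (rule ct_add)
  show "ct (r *\<^sub>R x) = r *\<^sub>R ct x" for r and x :: "'n cm" by (rule ct_scaleR)
  fix x :: "'n cm"
  have "mnorm (Rep_cm (ct x)) \<le> (\<Sum>i\<in>UNIV. \<Sum>j\<in>UNIV. cmod (Rep_cm (ct x) $ i $ j))"
    by (rule mnorm_le_sum)
  also have "\<dots> = (\<Sum>i\<in>UNIV. \<Sum>j\<in>UNIV. cmod (Rep_cm x $ i $ j))"
    by (simp add: ct.rep_eq, subst sum.swap, simp)
  also have "\<dots> \<le> real CARD('n) * mnorm (Rep_cm x)" by (rule sum_entries_le)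
  finally show "norm (ct x) \<le> norm x * real CARD('n)" by (simp add: norm_cm_Rep mult.commute)
qed

lemma ct_power: "ct (a ^ n) = ct a ^ n"
  by (induction n) (simp_all add: ct_mult power_commutes)

lemma ct_exp: "ct (exp a) = exp (ct a)"
proof -
  have "ct (exp a) = (\<Sum>n. ct (a^n /\<^sub>R fact n))"
    unfolding exp_def by (rule bounded_linear.suminf[OF bounded_linear_ct summable_exp_generic])
  then show ?thesis by (simp add: exp_def ct_scaleR ct_power)
qed

lemma exp_intertwine:
  assumes "A * P = P * B"
  shows "exp A * P = P * exp (B::'n::finite cm)"
proof -
  have pw: "A ^ n * P = P * B ^ n" for n
  proof (induction n)
    case (Suc n)
    have "A ^ Suc n * P = A * (A ^ n * P)" by (simp add: mult.assoc)
    also have "\<dots> = (A * P) * B ^ n" by (simp add: Suc mult.assoc)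
    also have "\<dots> = P * B ^ Suc n" by (simp add: assms mult.assoc power_commutes)
    finally show ?case .
  qed simp
  have "exp A * P = (\<Sum>n. A^n /\<^sub>R fact n * P)"
    unfolding exp_def by (rule suminf_mult2[OF summable_exp_generic])
  also have "\<dots> = (\<Sum>n. P * (B^n /\<^sub>R fact n))"
    by (simp add: pw)
  also have "\<dots> = P * exp B"
    unfolding exp_def by (rule suminf_mult[OF summable_exp_generic])
  finally show ?thesis .
qed




lemma trick:
  fixes b :: "'a::ab_group_add \<Rightarrow> 'a \<Rightarrow> real" and W :: "'a \<Rightarrow> 'a"
  assumes sym: "\<And>x y. b x y = b y x"
    and expand: "\<And>x y. b (x - y) (x - y) = b x x - 2 * b x y + b y y"
    and pos: "\<And>x. b x x \<ge> 0" and defin: "\<And>x. b x x = 0 \<Longrightarrow> x = 0"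
    and sa: "\<And>x y. b (W x) y = b x (W y)"
    and fix4: "(W^^4) v = v"
  shows "(W^^2) v = v"
proof -
  have comp: "b ((W^^i) x) ((W^^j) y) = b ((W^^(i+j)) x) y" for i j x y
  proof (induction j arbitrary: i)
    case (Suc j)
    have "b ((W^^i) x) ((W^^Suc j) y) = b ((W^^i) x) (W ((W^^j) y))" by simp
    also have "\<dots> = b (W ((W^^i) x)) ((W^^j) y)" by (simp add: sa)
    also have "\<dots> = b ((W^^Suc i) x) ((W^^j) y)" by simp
    also have "\<dots> = b ((W^^(Suc i + j)) x) y" by (rule Suc)
    finally show ?case by simp
  qed simp
  have am: "b x y \<le> (b x x + b y y) / 2" for x y
  proof -
    have "0 \<le> b x x - 2 * b x y + b y y" using pos[of "x - y"] expand[of x y] by simp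
    then show ?thesis by (simp add: field_simps)
  qed
  define a where "a k = b ((W^^k) v) v" for k
  have bij: "b ((W^^i) v) ((W^^j) v) = a (i+j)" for i j
    using comp[of i v j v] by (simp add: a_def)
  have a4: "a 4 = a 0" by (simp add: a_def fix4)
  have a6: "a 6 = a 2"
  proof -
    have "(W^^(2+4)) v = (W^^2) ((W^^4) v)" by (simp only: funpow_add o_apply)
    then have "(W^^6) v = (W^^2) ((W^^4) v)" by simp
    then show ?thesis by (simp add: a_def fix4)
  qed
  have "a 2 \<le> (a 4 + a 0) / 2"
    using am[of "(W^^2) v" "(W^^0) v"] bij[of 2 2] bij[of 0 0] bij[of 2 0] by simp
  then have le1: "a 2 \<le> a 0" using a4 by simp
  have "a 4 \<le> (a 2 + a 6) / 2"
    using am[of "(W^^1) v" "(W^^3) v"] bij[of 1 1] bij[of 3 3] bij[of 1 3] by (simp add: numeral_2_eq_2)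
  then have le2: "a 0 \<le> a 2" using a4 a6 by simp
  have "b ((W^^2) v - v) ((W^^2) v - v) = a 4 - 2 * a 2 + a 0"
    using expand[of "(W^^2) v" v] bij[of 2 2] bij[of 2 0] bij[of 0 0] by simp
  also have "\<dots> = 0" using a4 le1 le2 by simp
  finally have "(W^^2) v - v = 0" by (rule defin)
  then show ?thesis by simp
qed

lemma exp_pow: "exp (x::'a::{real_normed_algebra_1,banach}) ^ n = exp (real n *\<^sub>R x)"
proof (induction n)
  case (Suc n)
  have "exp (real (Suc n) *\<^sub>R x) = exp (x + real n *\<^sub>R x)" by (simp add: algebra_simps)
  also have "\<dots> = exp x * exp (real n *\<^sub>R x)"
    by (rule exp_add_commuting) (simp add: scaleR_left_commute[symmetric] mult_scaleR_right mult_scaleR_left)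
  finally show ?case by (simp add: Suc)
qed simp

lemma deriv_zero_seq:
  fixes f :: "real \<Rightarrow> 'a::real_normed_vector"
  assumes d: "(f has_vector_derivative D) (at 0)"
    and fh: "\<And>n. f (h n) = f 0" and h0: "h \<longlonglongrightarrow> 0" and hpos: "\<And>n. h n > 0"
  shows "D = 0"
proof -
  have "(\<lambda>y. norm (f (0 + y) - f 0 - y *\<^sub>R D) / norm y) \<midarrow>0\<rightarrow> 0"
    using d unfolding has_vector_derivative_def has_derivative_at by simp
  moreover have "filterlim h (at 0) sequentially"
    by (rule filterlim_atI[OF h0]) (use hpos in \<open>auto intro!: always_eventually simp: less_imp_neq[symmetric]\<close>)
  ultimately have "(\<lambda>n. norm (f (0 + h n) - f 0 - h n *\<^sub>R D) / norm (h n)) \<longlonglongrightarrow> 0"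
    by (rule filterlim_compose)
  moreover have "norm (f (0 + h n) - f 0 - h n *\<^sub>R D) / norm (h n) = norm D" for n
    using hpos[of n] by (simp add: fh)
  ultimately have "(\<lambda>n. norm D) \<longlonglongrightarrow> 0" by simp
  then have "norm D = 0" by (simp add: LIMSEQ_const_iff)
  then show ?thesis by simp
qed

locale invform =
  fixes Hp G :: "'n::finite cm"
  assumes HG: "Hp * G = 1" and GH: "G * Hp = 1" and ctHp: "ct Hp = Hp"
    and pos: "\<And>M. 0 \<le> Re (tr (ct M * G * M * Hp))"
    and defin: "\<And>M. Re (tr (ct M * G * M * Hp)) = 0 \<Longrightarrow> M = 0"
begin

definition herm :: "'n cm \<Rightarrow> bool" where "herm A \<longleftrightarrow> A * Hp = Hp * ct A"

definition bf :: "'n cm \<Rightarrow> 'n cm \<Rightarrow> real" where "bf M N = Re (tr (ct N * G * M * Hp))"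

lemma ctG: "ct G = G"
proof -
  have "Hp * ct G = 1" using arg_cong[OF GH, of ct] by (simp add: ct_mult ctHp)
  then have "G * (Hp * ct G) = G" by simp
  then show ?thesis by (simp add: mult.assoc[symmetric] GH)
qed

lemma herm_scaleR: "herm A \<Longrightarrow> herm (r *\<^sub>R A)"
  by (simp add: herm_def ct_scaleR)
lemma herm_uminus: "herm A \<Longrightarrow> herm (- A)"
  by (simp add: herm_def ct_uminus)
lemma herm_diff: "herm A \<Longrightarrow> herm B \<Longrightarrow> herm (A - B)"
  by (simp add: herm_def ct_diff algebra_simps)

lemma herm_exp: "herm A \<Longrightarrow> exp A * Hp = Hp * ct (exp A)"
  unfolding herm_def ct_exp by (rule exp_intertwine)

lemma herm_exp_G: assumes "herm A" shows "G * exp A = ct (exp A) * G"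
proof -
  have "G * (exp A * Hp) * G = G * (Hp * ct (exp A)) * G" using herm_exp[OF assms] by simp
  then show ?thesis by (simp add: mult.assoc GH HG) (simp add: mult.assoc[symmetric] GH)
qed

lemma bf_sym: "bf M N = bf N M"
proof -
  have "tr (ct N * G * M * Hp) = cnj (tr (ct M * G * N * Hp))"
  proof -
    have "cnj (tr (ct M * G * N * Hp)) = tr (Hp * ct N * G * M)"
      by (simp add: tr_ct[symmetric] ct_mult ctG ctHp mult.assoc)
    also have "\<dots> = tr (ct N * G * M * Hp)"
      by (subst tr_comm) (simp add: mult.assoc)
    finally show ?thesis by simp
  qed
  then show ?thesis by (simp add: bf_def)
qed

lemma bf_expand: "bf (x - y) (x - y) = bf x x - 2 * bf x y + bf y y"
proof -
  have "bf (x - y) (x - y) = bf x x - bf x y - bf y x + bf y y"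
    by (simp add: bf_def ct_diff algebra_simps tr_diff tr_add)
  then show ?thesis using bf_sym[of y x] by simp
qed

lemma halving:
  assumes hP: "herm P" and hQ: "herm Q" and e: "exp P * exp (- Q) = 1"
  shows "exp ((1/2) *\<^sub>R P) * exp (- ((1/2) *\<^sub>R Q)) = 1"
proof -
  define p where "p = exp ((1/4) *\<^sub>R P)"
  define q where "q = exp ((1/4) *\<^sub>R (- Q))"
  have hp: "G * p = ct p * G" unfolding p_def by (rule herm_exp_G[OF herm_scaleR[OF hP]])
  have hq: "q * Hp = Hp * ct q" unfolding q_def by (rule herm_exp[OF herm_scaleR[OF herm_uminus[OF hQ]]])
  define W where "W M = p * M * q" for M
  have Wk: "(W^^k) M = p^k * M * q^k" for k M
    by (induction k) (simp_all add: W_def mult.assoc power_commutes)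
  have sa: "bf (W M) N = bf M (W N)" for M N
  proof -
    have "ct N * G * (p * M * q) * Hp = ct N * (G * p) * M * (q * Hp)" by (simp add: mult.assoc)
    also have "\<dots> = (ct N * ct p * G * M * Hp) * ct q" by (simp add: hp hq mult.assoc)
    finally have "tr (ct N * G * (p * M * q) * Hp) = tr (ct q * (ct N * ct p * G * M * Hp))"
      by (simp add: tr_comm)
    then show ?thesis by (simp add: bf_def W_def ct_mult mult.assoc)
  qed
  have p4: "p ^ 4 = exp P" unfolding p_def exp_pow by simp
  have q4: "q ^ 4 = exp (- Q)" unfolding q_def exp_pow by simp
  have fx4: "(W^^4) 1 = 1" by (simp add: Wk p4 q4 e)
  have "(W^^2) 1 = 1"
  proof (rule trick[of bf W])
    show "bf x y = bf y x" for x y by (rule bf_sym)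
    show "bf (x - y) (x - y) = bf x x - 2 * bf x y + bf y y" for x y by (rule bf_expand)
    show "0 \<le> bf x x" for x unfolding bf_def by (rule pos)
    show "bf x x = 0 \<Longrightarrow> x = 0" for x unfolding bf_def by (rule defin)
    show "bf (W x) y = bf x (W y)" for x y by (rule sa)
  qed (rule fx4)
  moreover have "p ^ 2 = exp ((1/2) *\<^sub>R P)" unfolding p_def exp_pow by simp
  moreover have "q ^ 2 = exp (- ((1/2) *\<^sub>R Q))" unfolding q_def exp_pow by simp
  ultimately show ?thesis by (simp add: Wk)
qed

lemma exp_inj:
  assumes hP: "herm P" and hQ: "herm Q" and e: "exp P = exp Q"
  shows "P = Q"
proof -
  have all: "exp (((1/2)^n) *\<^sub>R P) * exp (- (((1/2)^n) *\<^sub>R Q)) = 1" for n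
  proof (induction n)
    case 0
    then show ?case using e exp_minus_inverse[of Q] by simp
  next
    case (Suc n)
    from halving[OF herm_scaleR[OF hP] herm_scaleR[OF hQ] Suc]
    show ?case by simp
  qed
  define f where "f t = exp (t *\<^sub>R P) * exp (t *\<^sub>R (- Q))" for t :: real
  have "(f has_vector_derivative (exp (0 *\<^sub>R P) * (exp (0 *\<^sub>R (- Q)) * (- Q)) + exp (0 *\<^sub>R P) * P * exp (0 *\<^sub>R (- Q)))) (at 0)"
    unfolding f_def
    by (intro has_vector_derivative_mult exp_scaleR_has_vector_derivative_right)
  then have d: "(f has_vector_derivative (P - Q)) (at 0)" by simp
  have "P - Q = 0"
  proof (rule deriv_zero_seq[OF d])
    show "f ((1/2)^n) = f 0" for n using all[of n] by (simp add: f_def)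
    show "(\<lambda>n. (1/2::real)^n) \<longlonglongrightarrow> 0" by (rule LIMSEQ_power_zero) simp
    show "(1/2::real)^n > 0" for n by simp
  qed
  then show ?thesis by simp
qed

end


definition ci :: "'n::finite cm" where "ci = Abs_cm (mat \<i>)"

lemma ci_comm: "ci * A = A * ci"
  unfolding ci_def by transfer (simp add: vec_eq_iff matrix_matrix_mult_def mat_def if_distrib if_distribR sum.delta' cong: if_cong)
lemma ct_ci: "ct ci = - ci"
  unfolding ci_def by transfer (simp add: vec_eq_iff mat_def)

locale cgroup = invform Hp G for Hp G :: "'n::finite cm" +
  fixes K :: "'n cm set"
  assumes one_K: "1 \<in> K" and mult_K: "\<And>a b. a \<in> K \<Longrightarrow> b \<in> K \<Longrightarrow> a * b \<in> K"
    and inv_K: "\<And>a. a \<in> K \<Longrightarrow> \<exists>b\<in>K. a * b = 1 \<and> b * a = 1"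
    and inv_Hp: "\<And>k. k \<in> K \<Longrightarrow> k * Hp * ct k = Hp"
begin

lemma lie_herm0:
  assumes X: "\<And>t. exp (t *\<^sub>R X) \<in> K"
  shows "X * Hp + Hp * ct X = 0"
proof -
  define f where "f t = exp (t *\<^sub>R X) * Hp * ct (exp (t *\<^sub>R X))" for t :: real
  have fc: "f = (\<lambda>t. Hp)" using inv_Hp[OF X] by (simp add: f_def fun_eq_iff)
  have "(f has_vector_derivative (exp (0 *\<^sub>R X) * Hp * ct (exp (0 *\<^sub>R X) * X) + (exp (0 *\<^sub>R X) * 0 + exp (0 *\<^sub>R X) * X * Hp) * ct (exp (0 *\<^sub>R X)))) (at 0)"
    unfolding f_def
    by (intro has_vector_derivative_mult exp_scaleR_has_vector_derivative_right has_vector_derivative_const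
        bounded_linear.has_vector_derivative[OF bounded_linear_ct])
  then have d1: "(f has_vector_derivative (Hp * ct X + X * Hp)) (at 0)" by (simp add: ct_mult)
  have d2: "(f has_vector_derivative 0) (at 0)" unfolding fc by simp
  from vector_derivative_unique_at[OF d1 d2] show ?thesis by (simp add: add.commute)
qed

lemma lie_herm:
  assumes X: "\<And>t. exp (t *\<^sub>R X) \<in> K"
  shows "herm (ci * X)"
proof -
  have e: "X * Hp = - (Hp * ct X)" using lie_herm0[OF X] by (simp add: add_eq_0_iff)
  have "ci * X * Hp = - (ci * Hp * ct X)" by (simp add: mult.assoc e)
  also have "\<dots> = Hp * ct (ci * X)"
    by (simp add: ct_mult ct_ci ci_comm[of Hp] mult.assoc ci_comm[of "ct X", symmetric])
  finally show ?thesis by (simp add: herm_def)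
qed

lemma keyL:
  assumes k: "k \<in> K" and X: "\<And>t. exp (t *\<^sub>R X) \<in> K" and Y: "\<And>t. exp (t *\<^sub>R Y) \<in> K"
    and e: "exp (ci * X) = k * exp (ci * Y)"
  shows "k = 1"
proof -
  define A where "A = ci * X"
  define B where "B = ci * Y"
  have hA: "herm A" unfolding A_def by (rule lie_herm[OF X])
  have hB: "herm B" unfolding B_def by (rule lie_herm[OF Y])
  obtain k' where k': "k' \<in> K" "k * k' = 1" "k' * k = 1" using inv_K[OF k] by blast
  have Hk: "Hp * ct k = k' * Hp"
  proof -
    have "k' * (k * Hp * ct k) = k' * Hp" using inv_Hp[OF k] by simp
    then show ?thesis by (simp add: mult.assoc[symmetric] k')
  qed
  have kH: "k * Hp = Hp * ct k'"
  proof -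
    have "k * (k' * Hp * ct k') = k * Hp" using inv_Hp[OF k'(1)] by simp
    then show ?thesis by (simp add: mult.assoc[symmetric] k')
  qed
  have eA: "exp A * Hp = Hp * ct (exp A)" by (rule herm_exp[OF hA])
  have eB: "exp B * Hp = Hp * ct (exp B)" by (rule herm_exp[OF hB])
  have "exp A ^ 2 * Hp = exp A * (exp A * Hp)"
    by (simp add: power2_eq_square mult.assoc)
  also have "\<dots> = exp A * Hp * ct (exp A)"
    by (metis eA mult.assoc)
  also have "\<dots> = k * (exp B * Hp * ct (exp B)) * ct k"
    using e by (simp add: A_def B_def ct_mult mult.assoc)
  also have "\<dots> = k * exp B ^ 2 * k' * Hp"
    by (simp add: power2_eq_square mult.assoc eB[symmetric] Hk)
  finally have "exp A ^ 2 * Hp * G = k * exp B ^ 2 * k' * Hp * G" by simp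
  then have e2: "exp A ^ 2 = k * exp B ^ 2 * k'" by (simp add: mult.assoc HG)
  define B' where "B' = k * B * k'"
  have conj: "exp (k * C * k') = k * exp C * k'" for C
  proof -
    have "(k * C * k') * k = k * C" by (simp add: mult.assoc k')
    then have "exp (k * C * k') * k = k * exp C" by (rule exp_intertwine)
    then have "exp (k * C * k') * k * k' = k * exp C * k'" by simp
    then show ?thesis by (simp add: mult.assoc k')
  qed
  have hB': "herm B'"
  proof -
    have "B' * Hp = k * B * (k' * Hp)" by (simp add: B'_def mult.assoc)
    also have "\<dots> = k * (B * Hp) * ct k" by (simp add: Hk[symmetric] mult.assoc)
    also have "\<dots> = (k * Hp) * ct B * ct k" by (simp add: herm_def[of B, THEN iffD1, OF hB] mult.assoc)
    also have "\<dots> = Hp * ct B'" by (simp add: kH B'_def ct_mult mult.assoc)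
    finally show ?thesis by (simp add: herm_def)
  qed
  have "exp (real 2 *\<^sub>R A) = exp (real 2 *\<^sub>R B')"
  proof -
    have p2: "exp C ^ 2 = exp (real 2 *\<^sub>R C)" for C :: "'n cm" by (rule exp_pow)
    show ?thesis
      using e2 conj[of "real 2 *\<^sub>R B"] p2[of A] p2[of B]
      by (simp add: B'_def mult_scaleR_left mult_scaleR_right del: of_nat_numeral)
  qed
  then have "real 2 *\<^sub>R A = real 2 *\<^sub>R B'"
    by (rule exp_inj[OF herm_scaleR[OF hA] herm_scaleR[OF hB']])
  then have AB: "A = B'" by simp
  have "k * exp B * k' = k * exp B" using e conj[of B] AB by (simp add: A_def B_def B'_def)
  then have "exp (- B) * k' * (k * exp B * k') = exp (- B) * k' * (k * exp B)" by simp
  moreover have eBm: "exp (- B) * exp B = 1" using exp_minus_inverse[of "- B"] by simp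
  moreover have "exp (- B) * k' * (k * exp B * k') = (exp (- B) * exp B) * k'"
    by (simp add: mult.assoc mult.assoc[symmetric, of k' k] k')
  moreover have "exp (- B) * k' * (k * exp B) = exp (- B) * exp B"
    by (simp add: mult.assoc mult.assoc[symmetric, of k' k] k')
  ultimately have "k' = 1" by simp
  then show ?thesis using k' by simp
qed

end




lemma tr_scaleR: "tr (r *\<^sub>R A) = r *\<^sub>R tr A"
  by transfer (simp add: scaleR_sum_right)
lemma tr_zero [simp]: "tr 0 = 0" by transfer simp
lemma tr_sum: "tr (\<Sum>x\<in>F. f x) = (\<Sum>x\<in>F. tr (f x))"
  by (induction F rule: infinite_finite_induct) (simp_all add: tr_add)

lemma tr_ctself: "Re (tr (ct Y * Y)) = (\<Sum>i\<in>UNIV. \<Sum>j\<in>UNIV. (cmod (Rep_cm Y $ j $ i))^2)"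
proof -
  have "tr (ct Y * Y) = (\<Sum>i\<in>UNIV. \<Sum>j\<in>UNIV. cnj (Rep_cm Y $ j $ i) * Rep_cm Y $ j $ i)"
    by (simp add: tr.rep_eq Rep_cm_mult ct.rep_eq matrix_matrix_mult_def)
  then show ?thesis by (simp add: Re_sum complex_mult_cnj cmod_power2 power2_eq_square[symmetric])
qed

lemma tr_ctself_nonneg: "0 \<le> Re (tr (ct Y * Y))"
  unfolding tr_ctself by (intro sum_nonneg) auto

lemma tr_ctself_zero: "Re (tr (ct Y * Y)) = 0 \<Longrightarrow> Y = 0"
proof -
  assume "Re (tr (ct Y * Y)) = 0"
  then have "\<forall>i\<in>UNIV. (\<Sum>j\<in>UNIV. (cmod (Rep_cm Y $ j $ i))^2) = 0"
    unfolding tr_ctself by (subst (asm) sum_nonneg_eq_0_iff) (auto intro: sum_nonneg)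
  then have "\<forall>i j. (cmod (Rep_cm Y $ j $ i))^2 = 0"
    by (subst (asm) sum_nonneg_eq_0_iff) auto
  then have "Rep_cm Y = 0" by (simp add: vec_eq_iff)
  then show "Y = 0" by (metis Rep_cm_inverse Rep_cm_zero)
qed

lemma mult_sum_cm: "A * (\<Sum>x\<in>F. f x) = (\<Sum>x\<in>F. A * f x)" "(\<Sum>x\<in>F. f x) * A = (\<Sum>x\<in>F. f x * (A::'n::finite cm))"
  by (simp_all add: sum_distrib_left sum_distrib_right)

locale hdecomp =
  fixes Hp :: "'n::finite cm" and F :: "'x set" and u :: "'x \<Rightarrow> real" and a :: "'x \<Rightarrow> 'n cm"
  assumes fin: "finite F" and Hp: "Hp = (\<Sum>x\<in>F. u x *\<^sub>R (a x * ct (a x)))"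
    and u0: "\<And>x. x \<in> F \<Longrightarrow> 0 \<le> u x" and u1: "sum u F = 1"
    and ainv: "\<And>x. x \<in> F \<Longrightarrow> \<exists>b. a x * b = 1 \<and> b * a x = 1"
begin

lemma ct_Hp: "ct Hp = Hp"
proof -
  have "ct Hp = (\<Sum>x\<in>F. ct (u x *\<^sub>R (a x * ct (a x))))"
    unfolding Hp by (induction F rule: infinite_finite_induct) (simp_all add: ct_add)
  then show ?thesis by (simp add: Hp ct_scaleR ct_mult)
qed

lemma upos: obtains x where "x \<in> F" "u x > 0"
proof -
  have "\<exists>x\<in>F. u x > 0"
  proof (rule ccontr)
    assume "\<not> ?thesis"
    then have "\<forall>x\<in>F. u x = 0" using u0 by force
    then show False using u1 by simp
  qed
  then show ?thesis using that by blast
qed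

lemma quad: "Re (tr (ct Y * Hp * Y)) = (\<Sum>x\<in>F. u x * Re (tr (ct (ct (a x) * Y) * (ct (a x) * Y))))"
proof -
  have "ct Y * Hp * Y = (\<Sum>x\<in>F. u x *\<^sub>R (ct Y * (a x * ct (a x)) * Y))"
    unfolding Hp by (simp add: mult_sum_cm mult_scaleR_left mult_scaleR_right)
  then have "tr (ct Y * Hp * Y) = (\<Sum>x\<in>F. u x *\<^sub>R tr (ct Y * (a x * ct (a x)) * Y))"
    by (simp add: tr_sum tr_scaleR)
  moreover have "ct Y * (a x * ct (a x)) * Y = ct (ct (a x) * Y) * (ct (a x) * Y)" for x
    by (simp add: ct_mult mult.assoc)
  ultimately show ?thesis by (simp add: Re_sum scaleR_conv_of_real)
qed

lemma quad_nonneg: "0 \<le> Re (tr (ct Y * Hp * Y))"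
  unfolding quad using u0 by (intro sum_nonneg mult_nonneg_nonneg tr_ctself_nonneg) auto

lemma quad_zero: assumes "Re (tr (ct Y * Hp * Y)) = 0" shows "Y = 0"
proof -
  obtain x where x: "x \<in> F" "u x > 0" by (rule upos)
  have "\<forall>x\<in>F. u x * Re (tr (ct (ct (a x) * Y) * (ct (a x) * Y))) = 0"
    using assms unfolding quad
    by (subst (asm) sum_nonneg_eq_0_iff) (use fin u0 in \<open>auto intro: mult_nonneg_nonneg tr_ctself_nonneg\<close>)
  then have "Re (tr (ct (ct (a x) * Y) * (ct (a x) * Y))) = 0" using x by auto
  then have z: "ct (a x) * Y = 0" by (rule tr_ctself_zero)
  obtain b where b: "a x * b = 1" "b * a x = 1" using ainv[OF x(1)] by blast
  have "ct b * (ct (a x) * Y) = Y" using arg_cong[OF b(1), of ct] by (simp add: ct_mult mult.assoc[symmetric])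
  then show ?thesis using z by simp
qed

lemma Hp_inj: "Hp * Y = 0 \<Longrightarrow> Y = 0"
  using quad_zero[of Y] by (simp add: mult.assoc)


lemma Hp_invertible: "\<exists>G. Hp * G = 1 \<and> G * Hp = 1"
proof -
  have "\<forall>x. Rep_cm Hp *v x = 0 \<longrightarrow> x = 0"
  proof (intro allI impI)
    fix x assume x: "Rep_cm Hp *v x = 0"
    define Y where "Y = Abs_cm (\<chi> i j. x $ i)"
    have "Rep_cm (Hp * Y) = 0"
      using x by (simp add: Y_def Rep_cm_mult vec_eq_iff matrix_matrix_mult_def matrix_vector_mult_def)
    then have "Hp * Y = 0" by (metis Rep_cm_inverse Rep_cm_zero)
    then have "Y = 0" by (rule Hp_inj)
    then have "Rep_cm Y = 0" by (simp add: Rep_cm_zero)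
    then show "x = 0" by (simp add: Y_def vec_eq_iff)
  qed
  then have "invertible (Rep_cm Hp)"
    using matrix_left_invertible_ker invertible_left_inverse by blast
  then obtain A' where "Rep_cm Hp ** A' = mat 1" "A' ** Rep_cm Hp = mat 1"
    unfolding invertible_def by blast
  then have "Hp * Abs_cm A' = 1" "Abs_cm A' * Hp = 1"
    by (metis Abs_cm_inv Rep_cm_inverse Rep_cm_mult Rep_cm_one)+
  then show ?thesis by blast
qed

lemma invform_Hp:
  assumes HG: "Hp * G = 1" and GH: "G * Hp = 1"
  shows "invform Hp G"
proof -
  have ctG: "ct G = G"
  proof -
    have "Hp * ct G = 1" using arg_cong[OF GH, of ct] by (simp add: ct_mult ct_Hp)
    then have "G * (Hp * ct G) = G" by simp
    then show ?thesis by (simp add: mult.assoc[symmetric] GH)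
  qed
  have Gq: "Re (tr (ct Z * G * Z)) = Re (tr (ct (G * Z) * Hp * (G * Z)))" for Z
    by (simp add: ct_mult ctG mult.assoc[symmetric] GH) (simp add: mult.assoc HG)
  have Gq0: "0 \<le> Re (tr (ct Z * G * Z))" for Z unfolding Gq by (rule quad_nonneg)
  have Gqz: "Re (tr (ct Z * G * Z)) = 0 \<Longrightarrow> Z = 0" for Z
  proof -
    assume "Re (tr (ct Z * G * Z)) = 0"
    then have "G * Z = 0" unfolding Gq by (rule quad_zero)
    then have "Hp * (G * Z) = 0" by simp
    then show "Z = 0" by (simp add: mult.assoc[symmetric] HG)
  qed
  have fm: "Re (tr (ct M * G * M * Hp)) = (\<Sum>x\<in>F. u x * Re (tr (ct (M * a x) * G * (M * a x))))" for M
  proof -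
    have "ct M * G * M * Hp = (\<Sum>x\<in>F. u x *\<^sub>R (ct M * G * M * (a x * ct (a x))))"
      unfolding Hp by (simp add: mult_sum_cm mult_scaleR_left mult_scaleR_right)
    then have "tr (ct M * G * M * Hp) = (\<Sum>x\<in>F. u x *\<^sub>R tr (ct M * G * M * (a x * ct (a x))))"
      by (simp add: tr_sum tr_scaleR)
    moreover have "tr (ct M * G * M * (a x * ct (a x))) = tr (ct (M * a x) * G * (M * a x))" for x
    proof -
      have "tr (ct M * G * M * (a x * ct (a x))) = tr ((ct M * G * M * a x) * ct (a x))"
        by (simp add: mult.assoc)
      also have "\<dots> = tr (ct (a x) * (ct M * G * M * a x))" by (rule tr_comm)
      finally show ?thesis by (simp add: ct_mult mult.assoc)
    qed
    ultimately show ?thesis by (simp add: Re_sum scaleR_conv_of_real)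
  qed
  show ?thesis
  proof
    show "Hp * G = 1" "G * Hp = 1" by (fact HG) (fact GH)
    show "ct Hp = Hp" by (rule ct_Hp)
    show "0 \<le> Re (tr (ct M * G * M * Hp))" for M
      unfolding fm using u0 by (intro sum_nonneg mult_nonneg_nonneg Gq0) auto
    show "M = 0" if z: "Re (tr (ct M * G * M * Hp)) = 0" for M
    proof -
      obtain x where x: "x \<in> F" "u x > 0" by (rule upos)
      have "\<forall>x\<in>F. u x * Re (tr (ct (M * a x) * G * (M * a x))) = 0"
        using z unfolding fm
        by (subst (asm) sum_nonneg_eq_0_iff) (use fin u0 in \<open>auto intro: mult_nonneg_nonneg Gq0\<close>)
      then have "Re (tr (ct (M * a x) * G * (M * a x))) = 0" using x by auto
      then have z: "M * a x = 0" by (rule Gqz)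
      obtain b where b: "a x * b = 1" "b * a x = 1" using ainv[OF x(1)] by blast
      have "M * a x * b = M" by (simp add: mult.assoc b)
      then show ?thesis using z by simp
    qed
  qed
qed

end




lemma bounded_linear_Abs_cm: "bounded_linear (Abs_cm :: complex^'n^'n \<Rightarrow> 'n::finite cm)"
proof (rule bounded_linear_intro[where K="real CARD('n) * real CARD('n)"])
  show "Abs_cm (x + y) = Abs_cm x + (Abs_cm y :: 'n cm)" for x y
    by (metis Abs_cm_inv Rep_cm_add Rep_cm_inverse)
  show "Abs_cm (r *\<^sub>R x) = r *\<^sub>R (Abs_cm x :: 'n cm)" for r x
    by (metis Abs_cm_inv Rep_cm_scaleR Rep_cm_inverse)
  fix x :: "complex^'n^'n"
  have "norm (Abs_cm x :: 'n cm) = mnorm x" by (simp add: norm_cm_Rep)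
  also have "\<dots> \<le> (\<Sum>i\<in>UNIV. \<Sum>j\<in>UNIV. cmod (x$i$j))" by (rule mnorm_le_sum)
  also have "\<dots> \<le> (\<Sum>i\<in>(UNIV::'n set). \<Sum>j\<in>(UNIV::'n set). norm x)"
  proof (intro sum_mono)
    fix i j
    have "cmod (x$i$j) \<le> norm (x$i)" by (rule Finite_Cartesian_Product.norm_nth_le)
    also have "\<dots> \<le> norm x" by (rule Finite_Cartesian_Product.norm_nth_le)
    finally show "cmod (x$i$j) \<le> norm x" .
  qed
  finally show "norm (Abs_cm x :: 'n cm) \<le> norm x * (real CARD('n) * real CARD('n))"
    by (simp add: mult_ac)
qed

lemma Abs_cm_add: "Abs_cm (x + y) = Abs_cm x + Abs_cm y"
  by (rule linear_simps(1)[OF bounded_linear_Abs_cm])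
lemma Abs_cm_diff: "Abs_cm (x - y) = Abs_cm x - Abs_cm y"
  by (rule linear_simps(2)[OF bounded_linear_Abs_cm])
lemma Abs_cm_scaleR: "Abs_cm (r *\<^sub>R x) = r *\<^sub>R Abs_cm x"
  by (rule linear_simps(5)[OF bounded_linear_Abs_cm])
lemma Abs_cm_zero: "Abs_cm 0 = 0"
  by (metis Rep_cm_inverse Rep_cm_zero)
lemma Abs_cm_mult: "Abs_cm (x ** y) = Abs_cm x * Abs_cm y"
  by (metis Abs_cm_inv Rep_cm_mult Rep_cm_inverse)
lemma Abs_cm_one: "Abs_cm (mat 1) = 1"
  by (metis Rep_cm_inverse Rep_cm_one)
lemma Abs_cm_eq: "(Abs_cm x = Abs_cm y) = (x = y)"
  by (metis Abs_cm_inv)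

definition Psi :: "complex^'n^'n \<Rightarrow> complex^'n^'n \<Rightarrow> complex^'n^'n::finite" where
  "Psi k M = Rep_cm (Abs_cm k * Abs_cm M * ct (Abs_cm k))"

lemma Psi_add: "Psi k (M + M') = Psi k M + Psi k M'"
  by (simp add: Psi_def Abs_cm_add algebra_simps Rep_cm_add)
lemma Psi_diff: "Psi k (M - M') = Psi k M - Psi k M'"
  by (simp add: Psi_def Abs_cm_diff algebra_simps Rep_cm_diff)
lemma Psi_scaleR: "Psi k (r *\<^sub>R M) = r *\<^sub>R Psi k M"
  by (simp add: Psi_def Abs_cm_scaleR Rep_cm_scaleR mult_scaleR_left mult_scaleR_right)
lemma linear_Psi: "linear (Psi k)"
  by (rule linearI) (simp_all add: Psi_add Psi_scaleR)
lemma Psi_Psi: "Psi j (Psi k M) = Psi (j ** k) M"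
  by (simp add: Psi_def Abs_cm_mult ct_mult mult.assoc Rep_cm_inverse)
lemma Psi_one: "Psi (mat 1) M = M"
  by (simp add: Psi_def Abs_cm_one)

lemma continuous_Psi_k: "continuous_on S (\<lambda>k. Psi k M)"
  unfolding Psi_def
  by (intro bounded_linear.continuous_on[OF bounded_linear_Rep_cm] continuous_on_mult
      bounded_linear.continuous_on[OF bounded_linear_Abs_cm] continuous_on_id continuous_on_const
      bounded_linear.continuous_on[OF bounded_linear_ct])

lemma parallelogram: "norm (x + y)^2 + norm (x - y)^2 = 2 * norm x^2 + 2 * norm (y::'a::real_inner)^2"
  by (simp add: power2_norm_eq_inner inner_add inner_diff inner_commute algebra_simps)


lemma matrix_inv_works:
  assumes "invertible (A::'a::semiring_1^'n^'n)"
  shows "A ** matrix_inv A = mat 1" "matrix_inv A ** A = mat 1"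
proof -
  have "\<exists>A'. A ** A' = mat 1 \<and> A' ** A = mat 1" using assms unfolding invertible_def by blast
  then have "A ** matrix_inv A = mat 1 \<and> matrix_inv A ** A = mat 1"
    unfolding matrix_inv_def by (rule someI_ex)
  then show "A ** matrix_inv A = mat 1" "matrix_inv A ** A = mat 1" by auto
qed

lemma Psi_zero: "Psi k 0 = 0"
  using Psi_scaleR[of k 0 0] by simp

lemma exists_invariant:
  fixes K :: "(complex^'n^'n::finite) set"
  assumes G: "compact_matrix_group K"
  shows "\<exists>H F u. finite F \<and> F \<subseteq> (\<lambda>k. Psi k (mat 1)) ` K \<and> (\<forall>x\<in>F. 0 \<le> u x) \<and> sum u F = 1
     \<and> H = (\<Sum>x\<in>F. u x *\<^sub>R x) \<and> (\<forall>j\<in>K. Psi j H = H)"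
proof -
  have cK: "compact K" and oneK: "mat 1 \<in> K" and invK: "\<And>x. x \<in> K \<Longrightarrow> invertible x \<and> matrix_inv x \<in> K"
    and mulK: "\<And>x y. x \<in> K \<Longrightarrow> y \<in> K \<Longrightarrow> x ** y \<in> K"
    using G unfolding compact_matrix_group_def by auto
  have Kne: "K \<noteq> {}" using oneK by blast
  define gens where "gens = (\<lambda>k. Psi k (mat 1)) ` K"
  define S where "S = convex hull gens"
  have cgens: "compact gens" unfolding gens_def
    by (rule compact_continuous_image[OF continuous_Psi_k cK])
  have cS: "compact S" unfolding S_def by (rule compact_convex_hull[OF cgens])
  have convS: "convex S" unfolding S_def by simp
  have Sne: "S \<noteq> {}" using Kne by (simp add: S_def gens_def)
  have invS: "Psi j M \<in> S" if j: "j \<in> K" and M: "M \<in> S" for j M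
  proof -
    have "Psi j ` gens \<subseteq> gens"
      using mulK[OF j] by (auto simp: gens_def Psi_Psi)
    then have "convex hull (Psi j ` gens) \<subseteq> S" unfolding S_def by (rule hull_mono)
    moreover have "Psi j ` S = convex hull (Psi j ` gens)"
      unfolding S_def by (rule convex_hull_linear_image[OF linear_Psi])
    ultimately show ?thesis using M by blast
  qed
  obtain cR where cR: "cR > 0" "\<And>x::'n cm. norm (Rep_cm x) \<le> norm x * cR"
    using bounded_linear.pos_bounded[OF bounded_linear_Rep_cm] by blast
  obtain cA where cA: "cA > 0" "\<And>x::complex^'n^'n. norm (Abs_cm x :: 'n cm) \<le> norm x * cA"
    using bounded_linear.pos_bounded[OF bounded_linear_Abs_cm] by blast
  obtain cT where cT: "cT > 0" "\<And>x::'n cm. norm (ct x) \<le> norm x * cT"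
    using bounded_linear.pos_bounded[OF bounded_linear_ct] by blast
  obtain b where b: "\<And>k. k \<in> K \<Longrightarrow> norm k \<le> b"
    using compact_imp_bounded[OF cK] unfolding bounded_iff by blast
  define C where "C = cR * (b * cA) * cA * ((b * cA) * cT)"
  have bound: "norm (Psi k M) \<le> C * norm M" if k: "k \<in> K" for k M
  proof -
    have nk: "norm (Abs_cm k :: 'n cm) \<le> b * cA"
      using cA(2)[of k] b[OF k] cA(1) by (meson mult_right_mono less_imp_le order_trans)
    have "norm (Psi k M) \<le> norm (Abs_cm k * Abs_cm M * ct (Abs_cm k)) * cR"
      unfolding Psi_def by (rule cR(2))
    also have "\<dots> \<le> (norm (Abs_cm k :: 'n cm) * norm (Abs_cm M :: 'n cm) * norm (ct (Abs_cm k :: 'n cm))) * cR"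
    proof (intro mult_right_mono)
      fix a c d :: "'n cm"
      have "norm (a * c * d) \<le> norm (a * c) * norm d" by (rule norm_mult_ineq)
      also have "\<dots> \<le> norm a * norm c * norm d" by (intro mult_right_mono norm_mult_ineq) simp
      finally show "norm (a * c * d) \<le> norm a * norm c * norm d" .
    qed (use cR in simp)
    also have "\<dots> \<le> ((b * cA) * (norm M * cA) * ((b * cA) * cT)) * cR"
    proof -
      have "norm (ct (Abs_cm k :: 'n cm)) \<le> (b * cA) * cT"
        using cT(2)[of "Abs_cm k"] nk cT(1) by (meson mult_right_mono less_imp_le order_trans)
      moreover have bcA: "0 \<le> b * cA" using nk norm_ge_zero order_trans by blast
      ultimately show ?thesis using nk cA(2)[of M] cR(1) cA(1)
        by (intro mult_right_mono mult_mono) (auto simp: less_imp_le)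
    qed
    also have "\<dots> = C * norm M" by (simp add: C_def mult_ac)
    finally show ?thesis .
  qed
  have C0: "0 \<le> C"
  proof -
    have "0 \<le> b" using b[OF oneK] norm_ge_zero order_trans by blast
    then show ?thesis using cR(1) cA(1) cT(1) by (simp add: C_def)
  qed
  define N where "N M = Sup ((\<lambda>k. norm (Psi k M)) ` K)" for M
  have bdd: "bdd_above ((\<lambda>k. norm (Psi k M)) ` K)" for M
    using bound by (auto intro!: bdd_aboveI2)
  have Nub: "norm (Psi k M) \<le> N M" if "k \<in> K" for k M
    unfolding N_def using that bdd by (auto intro: cSup_upper)
  have Nle: "N M \<le> c" if "\<And>k. k \<in> K \<Longrightarrow> norm (Psi k M) \<le> c" for M c
    unfolding N_def using that Kne by (auto intro: cSup_least)
  have N0: "0 \<le> N M" for M using Nub[OF oneK, of M] norm_ge_zero order_trans by blast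
  have Natt: "\<exists>k0\<in>K. N M = norm (Psi k0 M)" for M
  proof -
    have "continuous_on K (\<lambda>k. norm (Psi k M))"
      by (intro continuous_on_norm continuous_Psi_k)
    from continuous_attains_sup[OF cK Kne this] obtain k0 where
      "k0 \<in> K" "\<And>y. y \<in> K \<Longrightarrow> norm (Psi y M) \<le> norm (Psi k0 M)" by blast
    then show ?thesis using Nub[of k0 M] Nle[of M "norm (Psi k0 M)"] by (intro bexI[of _ k0]) auto
  qed
  have Nlip: "N M \<le> N M' + C * norm (M - M')" for M M'
  proof (rule Nle)
    fix k assume k: "k \<in> K"
    have "norm (Psi k M) = norm (Psi k M' + Psi k (M - M'))" by (simp add: Psi_diff)
    also have "\<dots> \<le> norm (Psi k M') + norm (Psi k (M - M'))" by (rule norm_triangle_ineq)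
    also have "\<dots> \<le> N M' + C * norm (M - M')" using Nub[OF k] bound[OF k] by (intro add_mono)
    finally show "norm (Psi k M) \<le> N M' + C * norm (M - M')" .
  qed
  have "C-lipschitz_on S N"
  proof (rule lipschitz_onI)
    fix x y
    have "N x - N y \<le> C * norm (x - y)" "N y - N x \<le> C * norm (x - y)"
      using Nlip[of x y] Nlip[of y x] by (auto simp: norm_minus_commute)
    then show "dist (N x) (N y) \<le> C * dist x y" by (simp add: dist_real_def dist_norm abs_le_iff)
  qed (rule C0)
  then have contN: "continuous_on S N" by (rule lipschitz_on_continuous_on)
  obtain H where H: "H \<in> S" "\<And>y. y \<in> S \<Longrightarrow> N H \<le> N y"
    using continuous_attains_inf[OF cS Sne contN] by blast
  have Kinv: "\<exists>k'\<in>K. k' ** k = mat 1" if "k \<in> K" for k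
    using invK[OF that] matrix_inv_works by blast
  have uniq: "A = B" if A: "A \<in> S" "N A = N H" and B: "B \<in> S" "N B = N H" for A B
  proof -
    define m where "m = N H"
    define mid where "mid = (1/2) *\<^sub>R A + (1/2) *\<^sub>R B"
    have midS: "mid \<in> S" unfolding mid_def using convexD[OF convS A(1) B(1), of "1/2" "1/2"] by simp
    obtain k0 where k0: "k0 \<in> K" "N mid = norm (Psi k0 mid)" using Natt by blast
    define x where "x = Psi k0 A"
    define y where "y = Psi k0 B"
    have pm: "Psi k0 mid = (1/2) *\<^sub>R (x + y)" by (simp add: mid_def x_def y_def Psi_add Psi_scaleR scaleR_add_right)
    have nx: "norm x \<le> m" using Nub[OF k0(1), of A] A by (simp add: x_def m_def)
    have ny: "norm y \<le> m" using Nub[OF k0(1), of B] B by (simp add: y_def m_def)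
    have m0: "0 \<le> m" by (simp add: m_def N0)
    have "m \<le> N mid" using H(2)[OF midS] by (simp add: m_def)
    then have "m^2 \<le> (N mid)^2" using m0 by (intro power_mono) auto
    also have "\<dots> = (1/4) * norm (x + y)^2" by (simp add: k0(2) pm power_mult_distrib power2_eq_square)
    also have "\<dots> = (1/4) * (2 * norm x^2 + 2 * norm y^2 - norm (x - y)^2)"
      using parallelogram[of x y] by simp
    also have "\<dots> \<le> (1/4) * (2 * m^2 + 2 * m^2 - norm (x - y)^2)"
      using power_mono[OF nx norm_ge_zero, of 2] power_mono[OF ny norm_ge_zero, of 2] by simp
    finally have "norm (x - y)^2 \<le> 0" by simp
    then have "x - y = 0" by simp
    then have z: "Psi k0 (A - B) = 0" by (simp add: Psi_diff x_def y_def)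
    obtain k' where "k' \<in> K" "k' ** k0 = mat 1" using Kinv[OF k0(1)] by blast
    then have "A - B = Psi k' (Psi k0 (A - B))" by (simp add: Psi_Psi Psi_one)
    then show ?thesis using z by (simp add: Psi_zero)
  qed
  have Ninv: "N (Psi j M) = N M" if j: "j \<in> K" for j M
  proof (rule antisym)
    show "N (Psi j M) \<le> N M"
      by (rule Nle) (simp add: Psi_Psi Nub mulK j)
    obtain j' where j': "j' \<in> K" "j' ** j = mat 1" using Kinv[OF j] by blast
    show "N M \<le> N (Psi j M)"
    proof (rule Nle)
      fix k assume k: "k \<in> K"
      have "Psi k M = Psi (k ** j') (Psi j M)" by (simp add: Psi_Psi matrix_mul_assoc[symmetric] j')
      then show "norm (Psi k M) \<le> N (Psi j M)" using Nub mulK[OF k j'(1)] by simp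
    qed
  qed
  have Hinv: "\<forall>j\<in>K. Psi j H = H"
  proof
    fix j assume j: "j \<in> K"
    show "Psi j H = H" by (rule uniq) (use invS[OF j H(1)] Ninv[OF j] H(1) in auto)
  qed
  from H(1) obtain F u where "finite F" "F \<subseteq> gens" "\<forall>x\<in>F. 0 \<le> u x" "sum u F = 1" "(\<Sum>x\<in>F. u x *\<^sub>R x) = H"
    unfolding S_def convex_hull_explicit by blast
  then show ?thesis using Hinv unfolding gens_def by (intro exI[of _ H] exI[of _ F] exI[of _ u]) auto
qed




lemma exp_conj:
  assumes "c * c' = 1" "c' * c = 1"
  shows "exp (c' * C * c) = c' * exp C * (c::'n::finite cm)"
proof -
  have "(c' * C * c) * c' = c' * C" by (simp add: mult.assoc assms)
  then have "exp (c' * C * c) * c' = c' * exp C" by (rule exp_intertwine)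
  then have "exp (c' * C * c) * c' * c = c' * exp C * c" by simp
  then show ?thesis by (simp add: mult.assoc assms)
qed

context cgroup
begin

lemma arrow:
  assumes kh: "kh \<in> K" and kt: "kt \<in> K" and f: "f \<in> K" and u': "u' \<in> K"
    and Xh: "\<And>t. exp (t *\<^sub>R Xh) \<in> K" and Xt: "\<And>t. exp (t *\<^sub>R Xt) \<in> K"
    and e: "u' * (kt * exp (ci * Xt)) = kh * exp (ci * Xh) * f"
  shows "u' * kt = kh * f"
proof -
  obtain kh' where kh': "kh' \<in> K" "kh * kh' = 1" "kh' * kh = 1" using inv_K[OF kh] by blast
  obtain f' where f': "f' \<in> K" "f * f' = 1" "f' * f = 1" using inv_K[OF f] by blast
  define u where "u = kh' * u' * kt"
  have uK: "u \<in> K" unfolding u_def by (intro mult_K kh' u' kt)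
  have "u * exp (ci * Xt) = kh' * (u' * (kt * exp (ci * Xt)))" by (simp add: u_def mult.assoc)
  also have "\<dots> = kh' * (kh * exp (ci * Xh) * f)" by (simp only: e)
  also have "\<dots> = (kh' * kh) * exp (ci * Xh) * f" by (simp only: mult.assoc)
  also have "\<dots> = exp (ci * Xh) * f" by (simp add: kh')
  finally have uP: "u * exp (ci * Xt) = exp (ci * Xh) * f" .
  define X' where "X' = f' * Xh * f"
  have X'K: "exp (t *\<^sub>R X') \<in> K" for t
  proof -
    have "exp (t *\<^sub>R X') = exp (f' * (t *\<^sub>R Xh) * f)" by (simp add: X'_def mult_scaleR_left mult_scaleR_right)
    also have "\<dots> = f' * exp (t *\<^sub>R Xh) * f" by (rule exp_conj[OF f'(2,3)])
    finally show ?thesis by (simp add: mult_K f f' Xh)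
  qed
  have "exp (ci * X') = exp (f' * (ci * Xh) * f)"
    by (simp add: X'_def mult.assoc[symmetric] ci_comm[of f'])
  also have "\<dots> = f' * exp (ci * Xh) * f" by (rule exp_conj[OF f'(2,3)])
  also have "\<dots> = (f' * u) * exp (ci * Xt)" by (simp add: mult.assoc uP)
  finally have "f' * u = 1" by (rule keyL[OF mult_K[OF f'(1) uK] X'K Xt])
  then have "f * (f' * u) = f" by simp
  then have uf: "u = f" by (simp add: mult.assoc[symmetric] f')
  have "kh * u = (kh * kh') * u' * kt" by (simp only: u_def mult.assoc)
  also have "\<dots> = u' * kt" by (simp add: kh')
  finally have "kh * u = u' * kt" .
  then show ?thesis using uf by simp
qed

end

lemma ci_Abs: "ci * Abs_cm X = Abs_cm (cscale \<i> X)"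
proof -
  have "mat \<i> ** X = cscale \<i> X"
    by (simp add: vec_eq_iff matrix_matrix_mult_def mat_def cscale_def if_distrib if_distribR sum.delta' cong: if_cong)
  then show ?thesis unfolding ci_def by (simp add: Abs_cm_mult[symmetric])
qed

lemma matrix_inv_Rep:
  assumes "c * d = 1" "d * c = 1"
  shows "matrix_inv (Rep_cm c) = Rep_cm d"
proof -
  have cd: "Rep_cm c ** Rep_cm d = mat 1" "Rep_cm d ** Rep_cm c = mat 1"
    using assms by (metis Rep_cm_mult Rep_cm_one)+
  then have "invertible (Rep_cm c)" unfolding invertible_def by blast
  note mi = matrix_inv_works[OF this]
  have "matrix_inv (Rep_cm c) = matrix_inv (Rep_cm c) ** (Rep_cm c ** Rep_cm d)" by (simp add: cd)
  also have "\<dots> = Rep_cm d" by (simp add: matrix_mul_assoc mi)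
  finally show ?thesis .
qed

lemma lie_cm:
  assumes "X \<in> lie_alg K"
  shows "exp (t *\<^sub>R Abs_cm X) \<in> Abs_cm ` K"
proof -
  have "mexp (t *\<^sub>R X) \<in> K" using assms unfolding lie_alg_def by blast
  moreover have "mexp (t *\<^sub>R X) = Rep_cm (exp (t *\<^sub>R Abs_cm X))" by (simp add: mexp_cm Abs_cm_scaleR)
  ultimately show ?thesis by (metis Rep_cm_inverse image_eqI)
qed




lemma Abs_cm_sum: "Abs_cm (\<Sum>x\<in>F. f x) = (\<Sum>x\<in>F. Abs_cm (f x))"
  by (induction F rule: infinite_finite_induct) (simp_all add: Abs_cm_zero Abs_cm_add)

lemma arrow_vec:
  fixes K :: "(complex^'n^'n::finite) set"
  assumes cg: "cgroup Hp Gm (Abs_cm ` K)"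
    and invK: "\<And>x. x \<in> K \<Longrightarrow> invertible x \<and> matrix_inv x \<in> K"
    and kh: "kh \<in> K" and kt: "kt \<in> K" and fa: "fa \<in> K" and fb: "fb \<in> K"
    and Xh: "Xh \<in> lie_alg K" and Xt: "Xt \<in> lie_alg K"
    and e: "fb = kh ** mexp (cscale \<i> Xh) ** fa ** matrix_inv (kt ** mexp (cscale \<i> Xt))"
  shows "fb = kh ** fa ** matrix_inv kt"
proof -
  define Ph where "Ph = exp (ci * Abs_cm Xh :: 'n cm)"
  define Pt where "Pt = exp (ci * Abs_cm Xt :: 'n cm)"
  have mh: "mexp (cscale \<i> Xh) = Rep_cm Ph" by (simp add: Ph_def mexp_cm ci_Abs)
  have mt: "mexp (cscale \<i> Xt) = Rep_cm Pt" by (simp add: Pt_def mexp_cm ci_Abs)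
  have kti: "kt ** matrix_inv kt = mat 1" "matrix_inv kt ** kt = mat 1"
    using matrix_inv_works invK[OF kt] by blast+
  have kti': "Abs_cm kt * Abs_cm (matrix_inv kt) = 1" "Abs_cm (matrix_inv kt) * Abs_cm kt = 1"
    using kti by (simp_all add: Abs_cm_mult[symmetric] Abs_cm_one)
  define D where "D = exp (- (ci * Abs_cm Xt)) * Abs_cm (matrix_inv kt)"
  have PtD1: "Pt * exp (- (ci * Abs_cm Xt)) = 1" unfolding Pt_def by (rule exp_minus_inverse)
  have PtD2: "exp (- (ci * Abs_cm Xt)) * Pt = 1" unfolding Pt_def using exp_minus_inverse[of "- (ci * Abs_cm Xt)"] by simp
  have c1: "(Abs_cm kt * Pt) * D = 1"
  proof -
    have "(Abs_cm kt * Pt) * D = Abs_cm kt * (Pt * exp (- (ci * Abs_cm Xt))) * Abs_cm (matrix_inv kt)"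
      by (simp only: D_def mult.assoc)
    then show ?thesis by (simp add: PtD1 kti')
  qed
  have c2: "D * (Abs_cm kt * Pt) = 1"
  proof -
    have "D * (Abs_cm kt * Pt) = exp (- (ci * Abs_cm Xt)) * (Abs_cm (matrix_inv kt) * Abs_cm kt) * Pt"
      by (simp only: D_def mult.assoc)
    then show ?thesis by (simp add: PtD2 kti')
  qed
  have mi: "matrix_inv (kt ** mexp (cscale \<i> Xt)) = Rep_cm D"
  proof -
    have "kt ** mexp (cscale \<i> Xt) = Rep_cm (Abs_cm kt * Pt)" by (simp add: mt Rep_cm_mult)
    then show ?thesis using matrix_inv_Rep[OF c1 c2] by simp
  qed
  have eA: "Abs_cm fb = Abs_cm kh * Ph * Abs_cm fa * D"
    using e by (simp add: mh mi Abs_cm_mult Rep_cm_inverse)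
  have "Abs_cm fb * (Abs_cm kt * Pt) = Abs_cm kh * Ph * Abs_cm fa * (D * (Abs_cm kt * Pt))"
    by (simp only: eA mult.assoc)
  then have "Abs_cm fb * (Abs_cm kt * Pt) = Abs_cm kh * Ph * Abs_cm fa"
    by (simp add: c2)
  then have e2: "Abs_cm fb * (Abs_cm kt * exp (ci * Abs_cm Xt)) = Abs_cm kh * exp (ci * Abs_cm Xh) * Abs_cm fa"
    unfolding Pt_def Ph_def .
  have "Abs_cm fb * Abs_cm kt = Abs_cm kh * Abs_cm fa"
    by (rule cgroup.arrow[OF cg _ _ _ _ lie_cm[OF Xh] lie_cm[OF Xt] e2]) (use kh kt fa fb in auto)
  then have "Abs_cm fb * Abs_cm kt * Abs_cm (matrix_inv kt) = Abs_cm kh * Abs_cm fa * Abs_cm (matrix_inv kt)"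
    by simp
  then have "Abs_cm fb = Abs_cm (kh ** fa ** matrix_inv kt)"
    by (simp add: mult.assoc kti' Abs_cm_mult)
  then show ?thesis by (simp add: Abs_cm_eq)
qed

theorem corollary4p6:
  fixes K :: "(complex^'n^'n) set"
    and QV :: "'v set" and QA :: "'e set" and hh tt :: "'e \<Rightarrow> 'v"
    and R :: "'e list set" and f1 f2 :: "'e \<Rightarrow> complex^'n^'n"
  assumes "compact_matrix_group K"
    and "quiver QV QA hh tt"
    and "finite R" and "\<forall>r\<in>R. is_cycle QA hh tt r"
    and "f1 \<in> reps K QA R" and "f2 \<in> reps K QA R"
    and "\<exists>g\<in>gauge (complexification K) QV. gauge_act QA hh tt g f1 = f2"
  shows "\<exists>g\<in>gauge K QV. gauge_act QA hh tt g f1 = f2"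
proof -
  note G = assms(1)
  have oneK: "mat 1 \<in> K" and invK: "\<And>x. x \<in> K \<Longrightarrow> invertible x \<and> matrix_inv x \<in> K"
    and mulK: "\<And>x y. x \<in> K \<Longrightarrow> y \<in> K \<Longrightarrow> x ** y \<in> K"
    using G unfolding compact_matrix_group_def by auto
  obtain H F u where Hd: "finite F" "F \<subseteq> (\<lambda>k. Psi k (mat 1)) ` K" "\<forall>x\<in>F. 0 \<le> u x" "sum u F = 1"
     "H = (\<Sum>x\<in>F. u x *\<^sub>R x)" "\<forall>j\<in>K. Psi j H = H"
    using exists_invariant[OF G] by blast
  define kof where "kof x = (SOME k. k \<in> K \<and> x = Psi k (mat 1))" for x
  have kof: "kof x \<in> K \<and> x = Psi (kof x) (mat 1)" if "x \<in> F" for x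
    unfolding kof_def by (rule someI_ex) (use that Hd(2) in blast)
  define a where "a x = (Abs_cm (kof x) :: 'n cm)" for x
  define Hp where "Hp = (Abs_cm H :: 'n cm)"
  have hd: "hdecomp Hp F u a"
  proof
    show "finite F" by (fact Hd(1))
    show "0 \<le> u x" if "x \<in> F" for x using Hd(3) that by blast
    show "sum u F = 1" by (fact Hd(4))
    show "Hp = (\<Sum>x\<in>F. u x *\<^sub>R (a x * ct (a x)))"
    proof -
      have "Hp = (\<Sum>x\<in>F. u x *\<^sub>R Abs_cm x)" by (simp add: Hp_def Hd(5) Abs_cm_sum Abs_cm_scaleR)
      also have "\<dots> = (\<Sum>x\<in>F. u x *\<^sub>R (a x * ct (a x)))"
      proof (rule sum.cong)
        fix x assume x: "x \<in> F"
        have "Abs_cm x = Abs_cm (Psi (kof x) (mat 1))" using kof[OF x] by simp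
        also have "\<dots> = a x * ct (a x)" by (simp add: Psi_def a_def Abs_cm_one Rep_cm_inverse)
        finally show "u x *\<^sub>R Abs_cm x = u x *\<^sub>R (a x * ct (a x))" by simp
      qed simp
      finally show ?thesis .
    qed
    show "\<exists>b. a x * b = 1 \<and> b * a x = 1" if "x \<in> F" for x
    proof -
      have k: "kof x \<in> K" using kof[OF that] by blast
      have "kof x ** matrix_inv (kof x) = mat 1" "matrix_inv (kof x) ** kof x = mat 1"
        using matrix_inv_works invK[OF k] by blast+
      then show ?thesis unfolding a_def
        by (intro exI[of _ "Abs_cm (matrix_inv (kof x))"]) (simp add: Abs_cm_mult[symmetric] Abs_cm_one)
    qed
  qed
  obtain Gm where HG: "Hp * Gm = 1" "Gm * Hp = 1" using hdecomp.Hp_invertible[OF hd] by blast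
  have ivf: "invform Hp Gm" by (rule hdecomp.invform_Hp[OF hd HG])
  have cg: "cgroup Hp Gm (Abs_cm ` K)"
  proof (rule cgroup.intro[OF ivf], unfold_locales)
    show "1 \<in> Abs_cm ` K" using oneK Abs_cm_one by (metis image_eqI)
    show "a * b \<in> Abs_cm ` K" if "a \<in> Abs_cm ` K" "b \<in> Abs_cm ` K" for a b
      using that mulK by (auto simp: Abs_cm_mult[symmetric])
    show "\<exists>b\<in>Abs_cm ` K. a * b = 1 \<and> b * a = 1" if aK: "a \<in> Abs_cm ` K" for a
    proof -
      obtain k where k: "k \<in> K" "a = Abs_cm k" using aK by blast
      have "k ** matrix_inv k = mat 1" "matrix_inv k ** k = mat 1"
        using matrix_inv_works invK[OF k(1)] by blast+
      then show ?thesis using invK[OF k(1)] k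
        by (intro bexI[of _ "Abs_cm (matrix_inv k)"]) (simp_all add: Abs_cm_mult[symmetric] Abs_cm_one)
    qed
    show "k * Hp * ct k = Hp" if kK: "k \<in> Abs_cm ` K" for k
    proof -
      obtain j where j: "j \<in> K" "k = Abs_cm j" using kK by blast
      have "Abs_cm (Psi j H) = (Abs_cm H :: 'n cm)" using Hd(6) j(1) by simp
      then show ?thesis by (simp add: Psi_def Hp_def j(2) Rep_cm_inverse)
    qed
  qed
  from assms(7) obtain g where g: "g \<in> gauge (complexification K) QV" "gauge_act QA hh tt g f1 = f2"
    by blast
  have gv: "\<exists>k X. k \<in> K \<and> X \<in> lie_alg K \<and> g v = k ** mexp (cscale \<i> X)" if "v \<in> QV" for v
  proof -
    have "g v \<in> complexification K" using g(1) that unfolding gauge_def by (rule PiE_mem)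
    then obtain k X where "g v = k ** mexp (cscale \<i> X)" "k \<in> K" "X \<in> lie_alg K"
      unfolding complexification_def by blast
    then show ?thesis by blast
  qed
  define kk where "kk v = (SOME k. k \<in> K \<and> (\<exists>X. X \<in> lie_alg K \<and> g v = k ** mexp (cscale \<i> X)))" for v
  have kk: "kk v \<in> K \<and> (\<exists>X. X \<in> lie_alg K \<and> g v = kk v ** mexp (cscale \<i> X))" if "v \<in> QV" for v
    unfolding kk_def by (rule someI_ex) (use gv[OF that] in blast)
  define g' where "g' = restrict kk QV"
  have f1K: "f1 \<in> QA \<rightarrow>\<^sub>E K" and f2K: "f2 \<in> QA \<rightarrow>\<^sub>E K" using assms(5,6) unfolding reps_def by auto
  have hv: "hh a \<in> QV" "tt a \<in> QV" if "a \<in> QA" for a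
    using assms(2) that unfolding quiver_def by auto
  show ?thesis
  proof (rule bexI[of _ g'])
    show "g' \<in> gauge K QV" unfolding gauge_def g'_def restrict_PiE_iff using kk by blast
    show "gauge_act QA hh tt g' f1 = f2"
    proof (rule ext)
      fix e
      show "gauge_act QA hh tt g' f1 e = f2 e"
      proof (cases "e \<in> QA")
        case False
        have "f2 e = undefined" by (rule PiE_arb[OF f2K False])
        moreover have "gauge_act QA hh tt g' f1 e = undefined" unfolding gauge_act_def using False by simp
        ultimately show ?thesis by simp
      next
        case True
        have "f2 e = gauge_act QA hh tt g f1 e" using g(2) by simp
        also have "\<dots> = g (hh e) ** f1 e ** matrix_inv (g (tt e))"
          unfolding gauge_act_def using True by simp
        finally have f2e: "f2 e = g (hh e) ** f1 e ** matrix_inv (g (tt e))" .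
        obtain Xh where Xh: "Xh \<in> lie_alg K" "g (hh e) = kk (hh e) ** mexp (cscale \<i> Xh)"
          using kk[OF hv(1)[OF True]] by blast
        obtain Xt where Xt: "Xt \<in> lie_alg K" "g (tt e) = kk (tt e) ** mexp (cscale \<i> Xt)"
          using kk[OF hv(2)[OF True]] by blast
        have "f2 e = kk (hh e) ** f1 e ** matrix_inv (kk (tt e))"
        proof (rule arrow_vec[OF cg invK])
          show "kk (hh e) \<in> K" "kk (tt e) \<in> K" using kk hv True by blast+
          show "f1 e \<in> K" "f2 e \<in> K" using f1K f2K True by auto
          show "Xh \<in> lie_alg K" "Xt \<in> lie_alg K" by (fact Xh(1)) (fact Xt(1))
          show "f2 e = kk (hh e) ** mexp (cscale \<i> Xh) ** f1 e ** matrix_inv (kk (tt e) ** mexp (cscale \<i> Xt))"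
            using f2e Xh(2) Xt(2) by simp
        qed
        moreover have "gauge_act QA hh tt g' f1 e = g' (hh e) ** f1 e ** matrix_inv (g' (tt e))"
          unfolding gauge_act_def using True by simp
        moreover have "g' (hh e) = kk (hh e)" "g' (tt e) = kk (tt e)"
          unfolding g'_def using hv[OF True] by simp_all
        ultimately show ?thesis by simp
      qed
    qed
  qed
qed


end
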